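(* If $G$ is a bipartite finite simple graph of order $n$ with at least one edge, then $\mathrm{es}_{\Delta}(G)\leq n/2$.
   Context: $\mathrm{es}_{\Delta}(G)$ is the minimum number of edges of $G$ whose removal results in a subgraph with maximum degree $\Delta(G)-1$. *)

theory Defs
  imports Complex_Main
begin

definition simple_graph :: "'a set \<Rightarrow> 'a set set \<Rightarrow> bool" where
  "simple_graph V E \<longleftrightarrow> finite V \<and> (\<forall>e\<in>E. e \<subseteq> V \<and> card e = 2)"

definition degree :: "'a set set \<Rightarrow> 'a \<Rightarrow> nat" where
  "degree E v = card {e \<in> E. v \<in> e}"

definition max_degree :: "'a set \<Rightarrow> 'a set set \<Rightarrow> nat" where
  "max_degree V E = Max (insert 0 (degree E ` V))"

definition bipartite :: "'a set \<Rightarrow> 'a set set \<Rightarrow> bool" where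
  "bipartite V E \<longleftrightarrow> (\<exists>X \<subseteq> V. \<forall>e\<in>E. \<exists>x y. e = {x, y} \<and> x \<in> X \<and> y \<in> V - X)"

definition es_Delta :: "'a set \<Rightarrow> 'a set set \<Rightarrow> nat" where
  "es_Delta V E = (LEAST k. \<exists>F \<subseteq> E. card F = k \<and> max_degree V (E - F) = max_degree V E - 1)"

end

theory Submission
  imports Defs
begin
lemma hall:
  fixes A :: "'i \<Rightarrow> 'b set"
  assumes "finite I" "\<forall>i\<in>I. finite (A i)" "\<forall>K\<subseteq>I. card K \<le> card (\<Union>(A ` K))"
  shows "\<exists>f. inj_on f I \<and> (\<forall>i\<in>I. f i \<in> A i)"
  using assms
proof (induction "card I" arbitrary: I A rule: less_induct)
  case less
  show ?case
  proof (cases "I = {}")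
    case True then show ?thesis by auto
  next
    case nonempty: False
    show ?thesis
    proof (cases "\<exists>K. K \<subseteq> I \<and> K \<noteq> {} \<and> K \<noteq> I \<and> card (\<Union>(A ` K)) \<le> card K")
      case True
      then obtain K where K: "K \<subseteq> I" "K \<noteq> {}" "K \<noteq> I" "card (\<Union>(A ` K)) \<le> card K" by blast
      define U where "U = \<Union>(A ` K)"
      have finK: "finite K" using K less.prems(1) finite_subset by blast
      have finU: "finite U" unfolding U_def using finK K less.prems(2) by auto
      have cK: "card K < card I" using K less.prems(1) by (meson psubsetI psubset_card_mono)
      obtain f1 where f1: "inj_on f1 K" "\<forall>i\<in>K. f1 i \<in> A i"
      proof -
        have "\<forall>i\<in>K. finite (A i)" using less.prems(2) K(1) by blast
        moreover have "\<forall>L\<subseteq>K. card L \<le> card (\<Union>(A ` L))" using less.prems(3) K(1) by blast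
        ultimately show ?thesis using less.hyps[OF cK finK] that by blast
      qed
      have cK2: "card (I - K) < card I" using K less.prems(1)
        card_Diff_subset[OF finK K(1)] card_mono[OF less.prems(1) K(1)]
        using card_gt_0_iff[of K] finK K(2) by linarith
      have hall2: "\<forall>L\<subseteq>I - K. card L \<le> card (\<Union>((\<lambda>i. A i - U) ` L))"
      proof (intro allI impI)
        fix L assume L: "L \<subseteq> I - K"
        have finL: "finite L" using L less.prems(1) finite_subset by blast
        have eq: "\<Union>((\<lambda>i. A i - U) ` L) = \<Union>(A ` (L \<union> K)) - U" unfolding U_def by auto
        have sub: "U \<subseteq> \<Union>(A ` (L \<union> K))" unfolding U_def by auto
        have fin: "finite (\<Union>(A ` (L \<union> K)))" using finL finK L K less.prems(2) by auto
        have "card (L \<union> K) \<le> card (\<Union>(A ` (L \<union> K)))" using less.prems(3)[rule_format, of "L \<union> K"] L K by auto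
        moreover have "card (L \<union> K) = card L + card K" using L finL finK by (subst card_Un_disjoint) auto
        moreover have "card U = card (\<Union>(A ` K))" unfolding U_def ..
        ultimately show "card L \<le> card (\<Union>((\<lambda>i. A i - U) ` L))"
          using K(4) eq card_Diff_subset[OF finU sub] card_mono[OF fin sub] unfolding U_def by simp
      qed
      obtain f2 where f2: "inj_on f2 (I - K)" "\<forall>i\<in>I - K. f2 i \<in> A i - U"
      proof -
        have a: "finite (I - K)" using less.prems(1) by blast
        have b: "\<forall>i\<in>I - K. finite (A i - U)" using less.prems(2) by blast
        show ?thesis using less.hyps[OF cK2 a b hall2] that by blast
      qed
      define f where "f i = (if i \<in> K then f1 i else f2 i)" for i
      have "inj_on f I"
      proof (rule inj_onI)
        fix i j assume ij: "i \<in> I" "j \<in> I" "f i = f j"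
        have "f1 i \<in> U" if "i \<in> K" for i using f1(2) that unfolding U_def by blast
        note U = this
        show "i = j"
        proof (cases "i \<in> K"; cases "j \<in> K")
          assume "i \<in> K" "j \<in> K" then show ?thesis using ij(3) f1(1) unfolding f_def by (simp add: inj_on_eq_iff)
        next
          assume "i \<notin> K" "j \<notin> K" then show ?thesis using ij f2(1) unfolding f_def by (simp add: inj_on_eq_iff)
        next
          assume a: "i \<in> K" "j \<notin> K"
          then have "f2 j \<notin> U" using f2(2) ij(2) by blast
          then show ?thesis using ij(3) U[of i] a unfolding f_def by auto
        next
          assume a: "i \<notin> K" "j \<in> K"
          then have "f2 i \<notin> U" using f2(2) ij(1) by blast
          then show ?thesis using ij(3) U[of j] a unfolding f_def by auto
        qed
      qed
      moreover have "\<forall>i\<in>I. f i \<in> A i" using f1 f2 unfolding f_def by auto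
      ultimately show ?thesis by blast
    next
      case False
      obtain i0 where i0: "i0 \<in> I" using nonempty by blast
      have "card {i0} \<le> card (A i0)" using less.prems(3)[rule_format, of "{i0}"] i0 by simp
      then have "A i0 \<noteq> {}" by auto
      then obtain x where x: "x \<in> A i0" by blast
      have cI: "card (I - {i0}) < card I" using i0 less.prems(1) by (meson card_Diff1_less)
      have hall2: "\<forall>L\<subseteq>I - {i0}. card L \<le> card (\<Union>((\<lambda>i. A i - {x}) ` L))"
      proof (intro allI impI)
        fix L assume L: "L \<subseteq> I - {i0}"
        show "card L \<le> card (\<Union>((\<lambda>i. A i - {x}) ` L))"
        proof (cases "L = {}")
          case True then show ?thesis by simp
        next
          case Lne: False
          have finL: "finite L" using L less.prems(1) finite_subset by blast
          have "L \<noteq> I" using L i0 by auto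
          then have c1: "card L < card (\<Union>(A ` L))" using False L Lne by (metis Diff_subset not_le order_trans)
          have e: "\<Union>((\<lambda>i. A i - {x}) ` L) = \<Union>(A ` L) - {x}" by auto
          have c2: "card (\<Union>(A ` L)) - 1 \<le> card (\<Union>(A ` L) - {x})"
            using card_Diff_singleton_if[of "\<Union>(A ` L)" x] by (cases "x \<in> \<Union>(A ` L)") auto
          show ?thesis unfolding e using c1 c2 by linarith
        qed
      qed
      obtain f2 where f2: "inj_on f2 (I - {i0})" "\<forall>i\<in>I - {i0}. f2 i \<in> A i - {x}"
      proof -
        have a: "finite (I - {i0})" using less.prems(1) by blast
        have b: "\<forall>i\<in>I - {i0}. finite (A i - {x})" using less.prems(2) by blast
        show ?thesis using less.hyps[OF cI a b hall2] that by blast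
      qed
      define f where "f = f2(i0 := x)"
      have "inj_on f I"
      proof (rule inj_onI)
        fix i j assume ij: "i \<in> I" "j \<in> I" "f i = f j"
        show "i = j"
        proof (cases "i = i0"; cases "j = i0")
          assume "i \<noteq> i0" "j \<noteq> i0" then show ?thesis using ij f2(1) unfolding f_def by (simp add: inj_on_eq_iff)
        next
          assume a: "i = i0" "j \<noteq> i0"
          then have "f2 j \<noteq> x" using f2(2) ij(2) by blast
          then show ?thesis using ij(3) a unfolding f_def by auto
        next
          assume a: "i \<noteq> i0" "j = i0"
          then have "f2 i \<noteq> x" using f2(2) ij(1) by blast
          then show ?thesis using ij(3) a unfolding f_def by auto
        qed simp
      qed
      moreover have "\<forall>i\<in>I. f i \<in> A i" using f2 x unfolding f_def by auto
      ultimately show ?thesis by blast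
    qed
  qed
qed

lemma degree_nbrs:
  assumes sg: "simple_graph V E"
  shows "degree E v = card {u. {v,u} \<in> E}"
proof -
  have "{e \<in> E. v \<in> e} = (\<lambda>u. {v,u}) ` {u. {v,u} \<in> E}"
  proof
    show "{e \<in> E. v \<in> e} \<subseteq> (\<lambda>u. {v,u}) ` {u. {v,u} \<in> E}"
    proof
      fix e assume e: "e \<in> {e \<in> E. v \<in> e}"
      then have "card e = 2" using sg unfolding simple_graph_def by auto
      then obtain a b where ab: "e = {a,b}" "a \<noteq> b" by (auto simp: card_2_iff)
      have "e \<in> E" "v \<in> e" using e by auto
      then obtain u where "e = {v,u}" using ab(1) by (metis insertE insert_commute singletonD)
      then show "e \<in> (\<lambda>u. {v,u}) ` {u. {v,u} \<in> E}" using \<open>e \<in> E\<close> by blast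
    qed
  qed auto
  moreover have "inj_on (\<lambda>u. {v,u}) {u. {v,u} \<in> E}"
    by (auto simp: inj_on_def doubleton_eq_iff)
  ultimately show ?thesis unfolding degree_def by (simp add: card_image)
qed

theorem corollary5p1:
  fixes V :: "'a set" and E :: "'a set set"
  assumes "simple_graph V E" and "bipartite V E" and "E \<noteq> {}"
  shows "real (es_Delta V E) \<le> real (card V) / 2"
proof -
  note sg = assms(1)
  have finV: "finite V" and Esub: "\<And>e. e \<in> E \<Longrightarrow> e \<subseteq> V \<and> card e = 2"
    using sg unfolding simple_graph_def by auto
  have finE: "finite E" using Esub finV by (meson Pow_iff finite_Pow_iff finite_subset subsetI)
  obtain X where X: "X \<subseteq> V" "\<forall>e\<in>E. \<exists>x y. e = {x, y} \<and> x \<in> X \<and> y \<in> V - X"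
    using assms(2) unfolding bipartite_def by blast
  define \<Delta> where "\<Delta> = max_degree V E"
  have finD: "finite (insert 0 (degree E ` V))" using finV by simp
  have degle: "\<And>v. v \<in> V \<Longrightarrow> degree E v \<le> \<Delta>"
    unfolding \<Delta>_def max_degree_def using finD by (simp add: Max_ge)
  obtain e0 where e0: "e0 \<in> E" using assms(3) by blast
  then obtain a where a: "a \<in> e0" using Esub[OF e0] by fastforce
  have aV: "a \<in> V" using a Esub[OF e0] by blast
  have "degree E a \<ge> 1" unfolding degree_def
    using e0 a finE by (metis (mono_tags, lifting) One_nat_def Suc_leI card_gt_0_iff empty_iff finite_subset mem_Collect_eq subsetI)
  then have Dpos: "\<Delta> \<ge> 1" using degle[OF aV] by simp
  have "\<Delta> \<in> insert 0 (degree E ` V)" unfolding \<Delta>_def max_degree_def using Max_in[OF finD] by blast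
  then obtain v0 where v0: "v0 \<in> V" "degree E v0 = \<Delta>" using Dpos by auto
  define N where "N u = {z. {u,z} \<in> E}" for u
  have Nsub: "N u \<subseteq> V" for u unfolding N_def using Esub by blast
  have Nirr: "u \<notin> N u" for u unfolding N_def using Esub by fastforce
  have degN: "degree E u = card (N u)" for u unfolding N_def using degree_nbrs[OF sg] .
  define A where "A u = N u \<union> (if degree E u < \<Delta> then {u} else {})" for u
  define w where "w u z = (if {u,z} \<in> E then 1 else 0) + (if z = u then \<Delta> - degree E u else (0::nat))" for u z
  have rowsum: "(\<Sum>z\<in>V. w u z) = \<Delta>" if u: "u \<in> V" for u
  proof -
    have "(\<Sum>z\<in>V. (if {u,z} \<in> E then 1 else 0::nat)) = card {z\<in>V. {u,z} \<in> E}"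
      using sum.inter_filter[OF finV, of "\<lambda>_. 1::nat" "\<lambda>z. {u,z}\<in>E"] by simp
    also have "{z\<in>V. {u,z} \<in> E} = N u" using Nsub unfolding N_def by blast
    finally have "(\<Sum>z\<in>V. (if {u,z} \<in> E then 1 else 0::nat)) = degree E u" using degN by simp
    moreover have "(\<Sum>z\<in>V. (if z = u then \<Delta> - degree E u else 0::nat)) = \<Delta> - degree E u"
      using finV u by simp
    ultimately show ?thesis unfolding w_def sum.distrib using degle[OF u] by simp
  qed
  have wsym: "w u z = w z u" for u z unfolding w_def by (auto simp: insert_commute)
  have hallc: "\<forall>K\<subseteq>V. card K \<le> card (\<Union>(A ` K))"
  proof (intro allI impI)
    fix K assume K: "K \<subseteq> V"
    define U where "U = \<Union>(A ` K)"
    have UV: "U \<subseteq> V" unfolding U_def A_def using Nsub K by (auto split: if_splits)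
    have finK: "finite K" using K finV finite_subset by blast
    have finU: "finite U" using UV finV finite_subset by blast
    have "(\<Sum>v\<in>K. \<Sum>z\<in>V. w v z) = (\<Sum>v\<in>K. \<Delta>)" using rowsum K by (intro sum.cong) auto
    then have "\<Delta> * card K = (\<Sum>v\<in>K. \<Sum>z\<in>V. w v z)" by (simp add: mult.commute)
    also have "\<dots> = (\<Sum>v\<in>K. \<Sum>z\<in>U. w v z)"
    proof (rule sum.cong[OF refl])
      fix v assume v: "v \<in> K"
      show "(\<Sum>z\<in>V. w v z) = (\<Sum>z\<in>U. w v z)"
      proof (rule sum.mono_neutral_right[OF finV UV])
        show "\<forall>z\<in>V - U. w v z = 0"
        proof
          fix z assume z: "z \<in> V - U"
          have "{v,z} \<notin> E" using z v unfolding U_def A_def N_def by blast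
          moreover have "z = v \<longrightarrow> \<Delta> - degree E v = 0" using z v unfolding U_def A_def by (auto split: if_splits)
          ultimately show "w v z = 0" unfolding w_def by simp
        qed
      qed
    qed
    also have "\<dots> = (\<Sum>z\<in>U. \<Sum>v\<in>K. w v z)" by (rule sum.swap)
    also have "\<dots> \<le> (\<Sum>z\<in>U. \<Sum>v\<in>V. w v z)"
      by (rule sum_mono, rule sum_mono2[OF finV K]) auto
    also have "\<dots> = (\<Sum>z\<in>U. \<Delta>)"
    proof (rule sum.cong[OF refl])
      fix z assume "z \<in> U"
      then have "z \<in> V" using UV by blast
      have "(\<Sum>v\<in>V. w v z) = (\<Sum>v\<in>V. w z v)" using wsym by metis
      then show "(\<Sum>v\<in>V. w v z) = \<Delta>" using rowsum[OF \<open>z \<in> V\<close>] by simp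
    qed
    also have "\<dots> = \<Delta> * card U" by simp
    finally show "card K \<le> card U" using Dpos by simp
  qed
  have finA: "\<forall>i\<in>V. finite (A i)" unfolding A_def using Nsub finV by (auto intro: finite_subset)
  obtain f where f: "inj_on f V" "\<forall>i\<in>V. f i \<in> A i" using hall[OF finV finA hallc] by blast
  have fVV: "f u \<in> V" if "u \<in> V" for u
    using f(2) that Nsub[of u] unfolding A_def by (auto split: if_splits)
  have fV: "f ` V = V"
    using f(1) fVV by (intro endo_inj_surj[OF finV]) auto
  have fE: "{u, f u} \<in> E" if "u \<in> V" "f u \<noteq> u" for u
    using f(2) that unfolding A_def N_def by (auto split: if_splits)
  have fS: "f u \<noteq> u" if "u \<in> V" "degree E u = \<Delta>" for u
    using f(2) that Nirr unfolding A_def by auto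
  have sides: "(u \<in> X) \<noteq> (f u \<in> X)" if uu: "u \<in> V" "f u \<noteq> u" for u
  proof -
    obtain x y where "{u, f u} = {x,y}" "x \<in> X" "y \<in> V - X" using X(2) fE[OF uu] by blast
    then show ?thesis by (auto simp: doubleton_eq_iff)
  qed
  define D where "D = {u \<in> V \<inter> X. f u \<noteq> u}"
  define M where "M = (\<lambda>u. {u, f u}) ` D"
  have MsubE: "M \<subseteq> E" unfolding M_def D_def using fE by auto
  have finM: "finite M" using MsubE finE finite_subset by blast
  have DV: "D \<subseteq> V" unfolding D_def by auto
  have cardM: "card M \<le> card D" unfolding M_def by (rule card_image_le) (use finV DV finite_subset in blast)
  have cardD: "2 * card D \<le> card V"
  proof -
    have fD: "f ` D \<subseteq> V - X" using sides fV DV unfolding D_def by auto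
    have "card (f ` D) = card D" using card_image[OF inj_on_subset[OF f(1) DV]] .
    moreover have "D \<inter> f ` D = {}" using fD unfolding D_def by auto
    moreover have "D \<union> f ` D \<subseteq> V" using fD DV by auto
    moreover have "finite D" using DV finV finite_subset by blast
    ultimately show ?thesis using card_mono[OF finV, of "D \<union> f ` D"] card_Un_disjoint[of D "f ` D"] by simp
  qed
  have atmost1: "card {e \<in> M. z \<in> e} \<le> 1" for z
  proof -
    have "\<forall>e1\<in>{e \<in> M. z \<in> e}. \<forall>e2\<in>{e \<in> M. z \<in> e}. e1 = e2"
    proof (intro ballI)
      fix e1 e2 assume e1: "e1 \<in> {e \<in> M. z \<in> e}" and e2: "e2 \<in> {e \<in> M. z \<in> e}"
      obtain u1 where u1: "u1 \<in> D" "e1 = {u1, f u1}" using e1 unfolding M_def by blast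
      obtain u2 where u2: "u2 \<in> D" "e2 = {u2, f u2}" using e2 unfolding M_def by blast
      have s1: "u1 \<in> X" "f u1 \<notin> X" "u1 \<in> V" using u1 sides unfolding D_def by auto
      have s2: "u2 \<in> X" "f u2 \<notin> X" "u2 \<in> V" using u2 sides unfolding D_def by auto
      have "z = u1 \<or> z = f u1" "z = u2 \<or> z = f u2" using e1 e2 u1 u2 by auto
      then have "u1 = u2" using s1 s2 f(1) unfolding inj_on_def by blast
      then show "e1 = e2" using u1 u2 by simp
    qed
    then show ?thesis using card_le_Suc0_iff_eq[of "{e \<in> M. z \<in> e}"] finM by simp
  qed
  have atleast1: "{e \<in> M. z \<in> e} \<noteq> {}" if z: "z \<in> V" "degree E z = \<Delta>" for z
  proof (cases "z \<in> X")
    case True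
    then have "z \<in> D" using z fS unfolding D_def by auto
    have zM: "{z, f z} \<in> M" unfolding M_def by (rule image_eqI[where x=z]) (simp_all add: \<open>z \<in> D\<close>)
    have zz: "{z, f z} \<in> {e \<in> M. z \<in> e}" using zM by simp
    show ?thesis
    proof
      assume h: "{e \<in> M. z \<in> e} = {}"
      show False using zz unfolding h by (rule emptyE)
    qed
  next
    case False
    have "z \<in> f ` V" using fV z(1) by simp
    then obtain u where u: "u \<in> V" "f u = z" by (auto elim!: imageE)
    have "f u \<noteq> u" using u fS[OF z] by auto
    then have "u \<in> X" using sides u False by auto
    then have "u \<in> D" using u \<open>f u \<noteq> u\<close> unfolding D_def by auto
    then have uD: "u \<in> D" .
    have uM: "{u, f u} \<in> M" unfolding M_def by (rule image_eqI[where x=u]) (simp_all add: uD)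
    have zz: "{u, f u} \<in> {e \<in> M. z \<in> e}" using uM u(2) by simp
    show ?thesis
    proof
      assume h: "{e \<in> M. z \<in> e} = {}"
      show False using zz unfolding h by (rule emptyE)
    qed
  qed
  have degM: "degree (E - M) z = degree E z - card {e \<in> M. z \<in> e}" for z
  proof -
    have "{e \<in> E - M. z \<in> e} = {e \<in> E. z \<in> e} - {e \<in> M. z \<in> e}" by auto
    moreover have "{e \<in> M. z \<in> e} \<subseteq> {e \<in> E. z \<in> e}" using MsubE by auto
    moreover have "finite {e \<in> M. z \<in> e}" using finM by simp
    ultimately show ?thesis unfolding degree_def by (simp add: card_Diff_subset)
  qed
  have degnew: "degree (E - M) z \<le> \<Delta> - 1" if "z \<in> V" for z
  proof (cases "degree E z = \<Delta>")
    case True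
    then have "card {e \<in> M. z \<in> e} \<ge> 1" using atleast1[OF that] finM
      by (simp add: Suc_leI card_gt_0_iff)
    then show ?thesis using degM True by simp
  next
    case False
    then show ?thesis using degM degle[OF that] by simp
  qed
  have "degree (E - M) v0 = \<Delta> - 1"
  proof -
    have "card {e \<in> M. v0 \<in> e} \<ge> 1" using atleast1[OF v0] finM
      by (simp add: Suc_leI card_gt_0_iff)
    then show ?thesis using degM v0 atmost1[of v0] by (simp add: le_antisym)
  qed
  have "max_degree V (E - M) = \<Delta> - 1"
    unfolding max_degree_def
  proof (rule Max_eqI)
    show "finite (insert 0 (degree (E - M) ` V))" using finV by simp
    show "y \<le> \<Delta> - 1" if "y \<in> insert 0 (degree (E - M) ` V)" for y using that degnew by auto
    show "\<Delta> - 1 \<in> insert 0 (degree (E - M) ` V)" using \<open>degree (E - M) v0 = \<Delta> - 1\<close> v0 by (metis image_eqI insertI2)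
  qed
  then have "es_Delta V E \<le> card M"
    unfolding es_Delta_def \<Delta>_def using MsubE by (intro Least_le) blast
  then show ?thesis using cardM cardD by simp
qed

end
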